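(* There is a numerical constant $c>0$ such that for every even integer $n\ge 2$ and every $\alpha>0$: if $(\sigma_0,\dots,\sigma_{n-1})$ is a uniformly random permutation of the vector consisting of $n/2$ entries equal to $1$ and $n/2$ entries equal to $-1$, then \[ \mathbb{E}\left[\left(\sum_{i=0}^{n-1}\sigma_i(1-\alpha)^i\right)^2\right]\;\ge\;c\cdot\min\left\{1+\frac1\alpha,\ n^3\alpha^2\right\}. \] *)

theory Defs
  imports "HOL-Combinatorics.Permutations" Complex_Main
begin

definition balanced_vec :: "nat \<Rightarrow> nat \<Rightarrow> real" where
  "balanced_vec n j = (if j < n div 2 then 1 else -1)"

definition perm_expect :: "nat \<Rightarrow> ((nat \<Rightarrow> nat) \<Rightarrow> real) \<Rightarrow> real" where
  "perm_expect n g =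
     (\<Sum>p\<in>{p. p permutes {..<n}}. g p) / real (card {p. p permutes {..<n}})"

end

theory Submission
  imports Defs
begin

lemma bsq: "balanced_vec n a * balanced_vec n a = 1"
  by (simp add: balanced_vec_def)

lemma sumb: assumes "even n" shows "(\<Sum>a<n. balanced_vec n a) = 0"
proof -
  obtain k where k: "n = 2*k" using assms by blast
  have "(\<Sum>a<n. balanced_vec n a) = (\<Sum>a\<in>{0..<k}. balanced_vec n a) + (\<Sum>a\<in>{k..<2*k}. balanced_vec n a)"
    using k by (simp add: sum.atLeastLessThan_concat lessThan_atLeast0)
  also have "(\<Sum>a\<in>{0..<k}. balanced_vec n a) = (\<Sum>a\<in>{0..<k}. 1)"
    by (rule sum.cong) (auto simp: balanced_vec_def k)
  also have "(\<Sum>a\<in>{k..<2*k}. balanced_vec n a) = (\<Sum>a\<in>{k..<2*k}. -1)"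
    by (rule sum.cong) (auto simp: balanced_vec_def k)
  finally show ?thesis by simp
qed

lemma sumbp: assumes "p permutes {..<n}" "even n"
  shows "(\<Sum>j<n. balanced_vec n (p j)) = 0"
  using sum.reindex_bij_betw[OF permutes_imp_bij[OF assms(1)], of "balanced_vec n"] sumb[OF assms(2)]
  by simp

definition TT :: "nat \<Rightarrow> nat \<Rightarrow> nat \<Rightarrow> real" where
  "TT n i j = (\<Sum>p\<in>{p. p permutes {..<n}}. balanced_vec n (p i) * balanced_vec n (p j))"

lemma TT_swap: assumes "i<n" "j<n" "l<n" "j\<noteq>i" "l\<noteq>i"
  shows "TT n i l = TT n i j"
proof -
  have q: "Transposition.transpose j l permutes {..<n}" using assms by (simp add: permutes_swap_id)
  show ?thesis unfolding TT_def
    apply (subst sum_permutations_compose_right[OF q])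
    using assms by simp
qed

lemma TT_diag: "TT n i i = fact n"
  by (simp add: TT_def bsq card_permutations)

lemma TT_off: assumes "i<n" "j<n" "j\<noteq>i" "even n"
  shows "TT n i j = - fact n / (real n - 1)"
proof -
  let ?P = "{p. p permutes {..<n}}"
  have n1: "real n - 1 > 0" using assms by linarith
  have "(\<Sum>l\<in>{..<n}-{i}. TT n i l) = (\<Sum>l\<in>{..<n}-{i}. TT n i j)"
    by (rule sum.cong) (auto intro!: TT_swap assms)
  also have "\<dots> = (real n - 1) * TT n i j" using assms by (simp add: of_nat_diff)
  finally have e1: "(\<Sum>l\<in>{..<n}-{i}. TT n i l) = (real n - 1) * TT n i j" .
  have "(\<Sum>l\<in>{..<n}-{i}. TT n i l) = (\<Sum>p\<in>?P. \<Sum>l\<in>{..<n}-{i}. balanced_vec n (p i) * balanced_vec n (p l))"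
    unfolding TT_def by (rule sum.swap)
  also have "\<dots> = (\<Sum>p\<in>?P. -1)"
  proof (rule sum.cong)
    fix p assume "p \<in> ?P"
    hence pp: "p permutes {..<n}" by simp
    have "(\<Sum>l\<in>{..<n}-{i}. balanced_vec n (p i) * balanced_vec n (p l))
        = balanced_vec n (p i) * (\<Sum>l\<in>{..<n}-{i}. balanced_vec n (p l))"
      by (simp add: sum_distrib_left)
    also have "(\<Sum>l\<in>{..<n}-{i}. balanced_vec n (p l)) = (\<Sum>l<n. balanced_vec n (p l)) - balanced_vec n (p i)"
      using assms by (simp add: sum_diff1)
    also have "\<dots> = - balanced_vec n (p i)" using sumbp[OF pp assms(4)] by simp
    finally show "(\<Sum>l\<in>{..<n}-{i}. balanced_vec n (p i) * balanced_vec n (p l)) = -1"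
      using bsq[of n "p i"] by simp
  qed simp
  also have "\<dots> = - fact n" by (simp add: card_permutations)
  finally show ?thesis using e1 n1 by (simp add: field_simps)
qed

lemma main_id: assumes "even n" "n \<ge> 2"
  shows "perm_expect n (\<lambda>p. (\<Sum>i<n. balanced_vec n (p i) * w i) ^ 2)
     = (real n * (\<Sum>i<n. w i ^ 2) - (\<Sum>i<n. w i) ^ 2) / (real n - 1)"
proof -
  let ?P = "{p. p permutes {..<n}}"
  let ?A = "\<Sum>i<n. w i ^ 2" and ?S = "\<Sum>i<n. w i"
  have n1: "real n - 1 > 0" using assms by linarith
  have fn: "fact n > (0::real)" by simp
  have "(\<Sum>p\<in>?P. (\<Sum>i<n. balanced_vec n (p i) * w i) ^ 2)
      = (\<Sum>p\<in>?P. \<Sum>i<n. \<Sum>j<n. w i * w j * (balanced_vec n (p i) * balanced_vec n (p j)))"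
    by (simp add: power2_eq_square sum_product algebra_simps)
  also have "\<dots> = (\<Sum>i<n. \<Sum>j<n. w i * w j * TT n i j)"
    unfolding TT_def sum_distrib_left
    by (subst sum.swap, rule sum.cong, simp, subst sum.swap, simp)
  also have "\<dots> = (\<Sum>i<n. fact n * w i ^ 2 - fact n / (real n - 1) * (w i * ?S - w i ^ 2))"
  proof (rule sum.cong)
    fix i assume i: "i \<in> {..<n}"
    have "(\<Sum>j<n. w i * w j * TT n i j) = w i * w i * TT n i i + (\<Sum>j\<in>{..<n}-{i}. w i * w j * TT n i j)"
      using i by (simp add: sum.remove)
    also have "(\<Sum>j\<in>{..<n}-{i}. w i * w j * TT n i j) = (\<Sum>j\<in>{..<n}-{i}. w i * w j * (- fact n / (real n - 1)))"
      by (rule sum.cong) (use i assms in \<open>auto simp: TT_off\<close>)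
    also have "\<dots> = - fact n / (real n - 1) * (w i * (\<Sum>j\<in>{..<n}-{i}. w j))"
      by (simp add: sum_distrib_left sum_distrib_right algebra_simps)
    also have "(\<Sum>j\<in>{..<n}-{i}. w j) = ?S - w i" using i by (simp add: sum_diff1)
    finally show "(\<Sum>j<n. w i * w j * TT n i j) = fact n * w i ^ 2 - fact n / (real n - 1) * (w i * ?S - w i ^ 2)"
      by (simp add: TT_diag power2_eq_square algebra_simps)
  qed simp
  also have "\<dots> = fact n * ?A - fact n / (real n - 1) * (?S * ?S - ?A)"
  proof -
    define c where "c = fact n / (real n - 1)"
    have "(\<Sum>i<n. fact n * w i ^ 2 - c * (w i * ?S - w i ^ 2))
       = fact n * ?A - c * ((\<Sum>i<n. w i * ?S) - ?A)"
      by (simp add: sum_subtractf sum_distrib_left right_diff_distrib)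
    also have "(\<Sum>i<n. w i * ?S) = ?S * ?S" by (simp add: sum_distrib_right)
    finally show ?thesis unfolding c_def .
  qed
  finally have e: "(\<Sum>p\<in>?P. (\<Sum>i<n. balanced_vec n (p i) * w i) ^ 2) = fact n * ?A - fact n / (real n - 1) * (?S * ?S - ?A)" .
  show ?thesis unfolding perm_expect_def e
    using n1 fn by (simp add: card_permutations field_simps power2_eq_square)
qed


lemma var_id: "(\<Sum>i<n. (w i - m)^2) = (\<Sum>i<n. w i ^ 2) - 2*m*(\<Sum>i<n. w i) + real n * m^2"
  by (simp add: power2_diff sum.distrib sum_subtractf sum_distrib_left sum_distrib_right algebra_simps)

lemma var_bound: assumes "n \<ge> 2"
  shows "(real n * (\<Sum>i<n. w i ^ 2) - (\<Sum>i<n. w i) ^ 2) / (real n - 1)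
     \<ge> (\<Sum>i<n. (w i - (\<Sum>i<n. w i) / real n)^2)"
proof -
  define A where "A = (\<Sum>i<n. w i ^ 2)"
  define S where "S = (\<Sum>i<n. w i)"
  define V where "V = (\<Sum>i<n. (w i - S / real n)^2)"
  have np: "real n > 1" using assms by simp
  have V0: "V \<ge> 0" unfolding V_def by (simp add: sum_nonneg)
  have "V = A - 2*(S/real n)*S + real n * (S/real n)^2" unfolding V_def A_def S_def by (rule var_id)
  hence "real n * A - S^2 = real n * V" using np by (simp add: field_simps power2_eq_square)
  hence "(real n * A - S^2) / (real n - 1) = real n * V / (real n - 1)" by simp
  also have "\<dots> \<ge> V" using np V0 by (simp add: field_simps)
  finally show ?thesis unfolding A_def S_def V_def by simp
qed

lemma pair_ineq: "(a - m)^2 + (b - m)^2 \<ge> (a - b)^2 / (2::real)"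
proof -
  have "(a - m)^2 + (b - m)^2 - (a - b)^2 / 2 = (a + b - 2*m)^2/2" by (simp add: power2_eq_square field_simps)
  thus ?thesis by (smt (verit) zero_le_power2 divide_nonneg_pos)
qed

lemma V_01: fixes w :: "nat \<Rightarrow> real" assumes "n \<ge> 2"
  shows "(\<Sum>i<n. (w i - m)^2) \<ge> (w 0 - w 1)^2 / 2"
proof -
  have "(\<Sum>i\<in>{0,1}. (w i - m)^2) \<le> (\<Sum>i<n. (w i - m)^2)"
    by (rule sum_mono2) (use assms in \<open>auto simp: sum_nonneg\<close>)
  hence "(w 0 - m)^2 + (w 1 - m)^2 \<le> (\<Sum>i<n. (w i - m)^2)" by simp
  thus ?thesis using pair_ineq[where a="w 0" and b="w 1" and m=m] by linarith
qed

lemma V_half: fixes w :: "nat \<Rightarrow> real" and k n :: nat assumes "n = 2*k"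
  shows "(\<Sum>i<n. (w i - m)^2) \<ge> (\<Sum>i<k. (w i - w (i+k))^2) / 2"
proof -
  have "(\<Sum>i<n. (w i - m)^2) = (\<Sum>i\<in>{0..<k}. (w i - m)^2) + (\<Sum>i\<in>{k..<2*k}. (w i - m)^2)"
    using assms by (simp add: sum.atLeastLessThan_concat lessThan_atLeast0)
  also have "(\<Sum>i\<in>{k..<2*k}. (w i - m)^2) = (\<Sum>i\<in>{0..<k}. (w (i+k) - m)^2)"
    using sum.shift_bounds_nat_ivl[of "\<lambda>i. (w i - m)^2" 0 k k] by (simp add: mult_2)
  finally have "(\<Sum>i<n. (w i - m)^2) = (\<Sum>i<k. (w i - m)^2 + (w (i+k) - m)^2)"
    by (simp add: sum.distrib lessThan_atLeast0)
  also have "\<dots> \<ge> (\<Sum>i<k. (w i - w (i+k))^2 / 2)"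
    by (rule sum_mono) (rule pair_ineq)
  finally show ?thesis by (simp add: sum_divide_distrib)
qed

lemma geo: "(1 - z) * (\<Sum>i<k. z^i) = 1 - (z::real)^k"
  using power_diff_1_eq[of z k] by (simp add: algebra_simps)


lemma key:
  fixes n :: nat and \<alpha> :: real
  assumes ev: "even n" and n2: "n \<ge> 2" and ap: "\<alpha> > 0"
  shows "(\<Sum>i<n. ((1-\<alpha>)^i - (\<Sum>i<n. (1-\<alpha>)^i) / real n)^2) \<ge> 1/256 * min (1 + 1/\<alpha>) (real n ^ 3 * \<alpha> ^ 2)"
proof -
  define x where "x = 1 - \<alpha>"
  define m where "m = (\<Sum>i<n. x^i) / real n"
  define V where "V = (\<Sum>i<n. (x^i - m)^2)"
  have goal: "V \<ge> 1/256 * min (1 + 1/\<alpha>) (real n ^ 3 * \<alpha> ^ 2)"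
  proof (cases "\<alpha> \<ge> 1")
    case True
    have "V \<ge> (x^0 - x^1)^2/2" unfolding V_def by (rule V_01[OF n2])
    hence "V \<ge> \<alpha>^2/2" by (simp add: x_def)
    moreover have "\<alpha>^2 \<ge> 1" using True by (simp add: one_le_power)
    moreover have "1/\<alpha> \<le> 1" using True by simp
    moreover have "min (1 + 1/\<alpha>) (real n ^ 3 * \<alpha> ^ 2) \<le> 1 + 1/\<alpha>" by simp
    ultimately have "min (1 + 1/\<alpha>) (real n ^ 3 * \<alpha> ^ 2) \<le> 2" "V \<ge> 1/2" by linarith+
    hence "1/256 * min (1 + 1/\<alpha>) (real n ^ 3 * \<alpha> ^ 2) \<le> 1/256 * 2" "V \<ge> 1/2"
      by (intro mult_left_mono, simp_all)
    thus ?thesis by linarith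
  next
    case False
    hence a1: "\<alpha> < 1" by simp
    obtain k where k: "n = 2*k" using ev by blast
    have k1: "k \<ge> 1" using k n2 by simp
    have x0: "0 < x" "x < 1" using a1 ap by (auto simp: x_def)
    define y where "y = x^k"
    have y0: "0 < y" using x0 by (simp add: y_def)
    have y1: "y < 1" unfolding y_def using x0 k1 by (simp add: power_less_one_iff)
    define G where "G = (\<Sum>i<k. (x^2)^i)"
    have G0: "G \<ge> 0" unfolding G_def by (simp add: sum_nonneg)
    have "V \<ge> (\<Sum>i<k. (x^i - x^(i+k))^2) / 2" unfolding V_def by (rule V_half[OF k])
    also have "(\<Sum>i<k. (x^i - x^(i+k))^2) = (\<Sum>i<k. (x^2)^i * (1-y)^2)"
      by (rule sum.cong) (simp_all add: y_def power_add power2_eq_square power_mult_distrib algebra_simps)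
    also have "\<dots> = (1-y)^2 * G" unfolding G_def by (simp add: sum_distrib_left mult.commute)
    finally have V1: "V \<ge> (1-y)^2 * G / 2" .
    have "(1 - x^2) * G = 1 - (x^2)^k" unfolding G_def by (rule geo)
    also have "(x^2)^k = y^2" unfolding y_def by (metis power_mult mult.commute)
    finally have G1: "(1 - x^2) * G = 1 - y^2" .
    have "1 - y^2 \<ge> 1 - y" using y0 y1 by (simp add: power2_eq_square mult_left_le_one_le)
    moreover have "(1 - x^2) * G \<le> (2*\<alpha>) * G"
      by (rule mult_right_mono) (use G0 ap in \<open>simp_all add: x_def power2_eq_square algebra_simps\<close>)
    ultimately have G2: "G \<ge> (1-y)/(2*\<alpha>)" using G1 ap by (simp add: field_simps)
    have "(1-y)^2 * G \<ge> (1-y)^2 * ((1-y)/(2*\<alpha>))"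
      by (rule mult_left_mono[OF G2]) simp
    with V1 have V2: "V \<ge> (1-y)^3 / (4*\<alpha>)" by (simp add: power2_eq_square power3_eq_cube field_simps)
    have B: "1 + real k * \<alpha> \<le> (1+\<alpha>)^k" using ap by (intro Bernoulli_inequality) simp
    have "y * (1+\<alpha>)^k = (1 - \<alpha>^2)^k" unfolding y_def x_def
      by (simp add: power_mult_distrib[symmetric] power2_eq_square algebra_simps)
    also have "\<dots> \<le> 1" using ap a1 by (intro power_le_one) (simp_all add: power2_eq_square mult_le_one)
    finally have "y * (1+\<alpha>)^k \<le> 1" .
    moreover have "y * (1 + real k * \<alpha>) \<le> y * (1+\<alpha>)^k" using B y0 by simp
    ultimately have Y: "y * (1 + real k * \<alpha>) \<le> 1" by linarith
    show ?thesis
    proof (cases "real k * \<alpha> \<ge> 1")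
      case True
      have "y * 2 \<le> y * (1 + real k * \<alpha>)" using True y0 by (intro mult_left_mono) simp_all
      hence "y * 2 \<le> 1" using Y by linarith
      hence "1 - y \<ge> 1/2" by simp
      hence "(1-y)^3 \<ge> (1/2)^3" by (intro power_mono) simp_all
      hence "V \<ge> (1/2)^3 / (4*\<alpha>)" using V2 ap by (smt (verit) divide_right_mono)
      moreover have "min (1 + 1/\<alpha>) (real n ^ 3 * \<alpha> ^ 2) \<le> 2/\<alpha>" using a1 ap
        by (smt (verit) min.cobounded1 le_divide_eq_1_pos add_divide_distrib divide_self)
      hence "1/256 * min (1 + 1/\<alpha>) (real n ^ 3 * \<alpha> ^ 2) \<le> 1/256 * (2/\<alpha>)"
        by (intro mult_left_mono) simp_all
      moreover have "1/256 * (2/\<alpha>) \<le> (1/2)^3 / (4*\<alpha>)" using ap by (simp add: field_simps)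
      ultimately show ?thesis using \<open>V \<ge> (1/2)^3 / (4*\<alpha>)\<close> by linarith
    next
      case False
      have "(1-y) * 2 \<ge> real k * \<alpha>"
      proof -
        have "(1-y) * (1 + real k * \<alpha>) \<ge> real k * \<alpha>" using Y by (simp add: algebra_simps)
        moreover have "(1-y) * (1 + real k * \<alpha>) \<le> (1-y) * 2" using False y1 by (intro mult_left_mono) simp_all
        ultimately show ?thesis by linarith
      qed
      hence "(1-y) \<ge> real k * \<alpha> / 2" by simp
      hence "(1-y)^3 \<ge> (real k * \<alpha> / 2)^3" using ap by (intro power_mono) simp_all
      hence "V \<ge> (real k * \<alpha> / 2)^3 / (4*\<alpha>)" using V2 ap by (smt (verit) divide_right_mono)
      also have "(real k * \<alpha> / 2)^3 / (4*\<alpha>) = 1/256 * (real n ^ 3 * \<alpha> ^ 2)"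
        using ap k by (simp add: power3_eq_cube power2_eq_square field_simps)
      finally have "1 / 256 * (real n ^ 3 * \<alpha>^2) \<le> V" .
      moreover have "1/256 * min (1 + 1/\<alpha>) (real n ^ 3 * \<alpha> ^ 2) \<le> 1 / 256 * (real n ^ 3 * \<alpha>^2)"
        by (intro mult_left_mono) simp_all
      ultimately show ?thesis by linarith
    qed
  qed
  thus ?thesis unfolding V_def m_def x_def .
qed

theorem lemma1:
  shows "\<exists>c::real. c > 0 \<and>
    (\<forall>(n::nat) (\<alpha>::real). even n \<and> n \<ge> 2 \<and> \<alpha> > 0 \<longrightarrow>
       perm_expect n (\<lambda>p. (\<Sum>i<n. balanced_vec n (p i) * (1 - \<alpha>) ^ i) ^ 2)
         \<ge> c * min (1 + 1 / \<alpha>) (real n ^ 3 * \<alpha> ^ 2))"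
proof (rule exI[of _ "1/256"], intro conjI allI impI)
  fix n :: nat and \<alpha> :: real
  assume h: "even n \<and> n \<ge> 2 \<and> \<alpha> > 0"
  show "perm_expect n (\<lambda>p. (\<Sum>i<n. balanced_vec n (p i) * (1 - \<alpha>) ^ i) ^ 2)
         \<ge> 1/256 * min (1 + 1 / \<alpha>) (real n ^ 3 * \<alpha> ^ 2)"
  proof -
    have e: "perm_expect n (\<lambda>p. (\<Sum>i<n. balanced_vec n (p i) * (1 - \<alpha>) ^ i) ^ 2)
      = (real n * (\<Sum>i<n. ((1-\<alpha>)^i) ^ 2) - (\<Sum>i<n. (1-\<alpha>)^i) ^ 2) / (real n - 1)"
      using main_id[of n "\<lambda>i. (1-\<alpha>)^i"] h by simp
    show ?thesis unfolding e using h key[of n \<alpha>] var_bound[of n "\<lambda>i. (1-\<alpha>)^i"] by linarith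
  qed
qed simp

end
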